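(* In the linear setting of the context, let $(\mathbf c(t),v(t),\phi(t))$ be a solution of the linear pump-leak system. Then $$\frac{d\tilde G}{dt}=-J,\qquad J=\langle\boldsymbol\mu+\mathbf q,L(\boldsymbol\mu+\mathbf q)\rangle_{\mathbb R^N}+\zeta\pi_{\rm w}^2=\langle\boldsymbol\gamma+\mathbf q,\hat L(\boldsymbol\gamma+\mathbf q)\rangle_{\mathbb R^N}+\zeta\pi_{\rm w}^2,$$ where $$\tilde G(\mathbf c,v)=v\sum_{k=1}^N\Big(c_k\big(\ln(c_k/c_k^{\rm e})-1+q_k\big)+c_k^{\rm e}\Big)+A\Big(\ln\frac{A}{v}-1\Big).$$ In particular $\tilde G$ is non-increasing along solutions.
   Context: Fix an integer $N\ge2$, real valences $z_1,\dots,z_N$ not all zero, $\mathbf z=(z_1,\dots,z_N)^T$, positive constants $c_k^{\rm e}$ with $\sum_kz_kc_k^{\rm e}=0$, $A>0$, $z\in\mathbb R$. Let $L$ be a real symmetric positive definite $N\times N$ matrix, $\mathbf p\in\mathbb R^N$ constant, $\zeta>0$, $\mathbf q=L^{-1}\mathbf p$. For $\mathbf c\in(0,\infty)^N$, $v>0$, $\phi\in\mathbb R$: $\gamma_k=\ln(c_k/c_k^{\rm e})$, $\boldsymbol\gamma=(\gamma_k)$, $\mu_k=\gamma_k+z_k\phi$, $\pi_{\rm w}=\sum_kc_k^{\rm e}-(\sum_kc_k+A/v)$. The linear pump-leak system is $\frac{d}{dt}(v\mathbf c)=-L\boldsymbol\mu-\mathbf p$, $0=\sum_kz_kc_k+zA/v$,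 $\frac{dv}{dt}=-\zeta\pi_{\rm w}$; a solution is a triple with $\mathbf c(t)\in(0,\infty)^N$, $v(t)>0$ of class $C^1$ and $\phi(t)$ continuous satisfying these equations. $\hat L$ is the $N\times N$ matrix $\hat L=L-\frac{(L\mathbf z)(L\mathbf z)^T}{\langle\mathbf z,L\mathbf z\rangle}$. (Along solutions, the electroneutrality constraint forces $\phi=-\langle\mathbf z,L\boldsymbol\gamma+\mathbf p\rangle/\langle\mathbf z,L\mathbf z\rangle$.) *)

theory Defs
  imports "HOL-Analysis.Analysis"
begin

text \<open>Linear pump-leak system. Vectors in R^N are modelled as real^'n with N = CARD('n).\<close>

definition gam :: "real^'n \<Rightarrow> real^'n \<Rightarrow> real^'n" where
  "gam ce c = (\<chi> k. ln (c $ k / ce $ k))"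

definition chempot :: "real^'n \<Rightarrow> real^'n \<Rightarrow> real^'n \<Rightarrow> real \<Rightarrow> real^'n" where
  "chempot ce zv c phi = gam ce c + phi *\<^sub>R zv"

definition piw :: "real^'n \<Rightarrow> real \<Rightarrow> real^'n \<Rightarrow> real \<Rightarrow> real" where
  "piw ce A c v = (\<Sum>k\<in>UNIV. ce $ k) - ((\<Sum>k\<in>UNIV. c $ k) + A / v)"

definition Lhat :: "real^'n^'n \<Rightarrow> real^'n \<Rightarrow> real^'n^'n" where
  "Lhat L zv = L - (1 / (zv \<bullet> (L *v zv))) *\<^sub>R (\<chi> i j. (L *v zv) $ i * (L *v zv) $ j)"

definition Gtilde :: "real^'n \<Rightarrow> real \<Rightarrow> real^'n \<Rightarrow> real^'n \<Rightarrow> real \<Rightarrow> real" where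
  "Gtilde ce A q c v =
     v * (\<Sum>k\<in>UNIV. c $ k * (ln (c $ k / ce $ k) - 1 + q $ k) + ce $ k) + A * (ln (A / v) - 1)"

end

theory Submission imports Defs begin

lemma sym_dot:
  fixes L :: "real^'n^'n"
  assumes "transpose L = L"
  shows "x \<bullet> (L *v y) = y \<bullet> (L *v x)"
proof -
  have "x \<bullet> (L *v y) = (x v* L) \<bullet> y" by (simp add: dot_lmul_matrix)
  also have "x v* L = L *v x" by (metis assms vector_transpose_matrix)
  finally show ?thesis by (simp add: inner_commute)
qed

lemma outer_mv:
  fixes a x :: "real^'n"
  shows "(\<chi> i j. a$i * a$j) *v x = (a \<bullet> x) *\<^sub>R a"
  by (simp add: vec_eq_iff matrix_vector_mult_def inner_vec_def sum_distrib_left sum_distrib_right algebra_simps)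

lemma Lhat_quad:
  fixes L :: "real^'n^'n"
  shows "x \<bullet> (Lhat L z *v x) = x \<bullet> (L *v x) - ((L *v z) \<bullet> x)^2 / (z \<bullet> (L *v z))"
  unfolding Lhat_def
  by (simp add: matrix_vector_mult_diff_rdistrib scaleR_matrix_vector_assoc[symmetric] outer_mv inner_diff_right power2_eq_square inner_commute)

lemma Linv:
  fixes L :: "real^'n^'n"
  assumes "\<forall>x. x \<noteq> 0 \<longrightarrow> x \<bullet> (L *v x) > 0"
  shows "L *v (matrix_inv L *v p) = p"
proof -
  have "\<forall>x. L *v x = 0 \<longrightarrow> x = 0" using assms by force
  then have "invertible L" using matrix_left_invertible_ker invertible_left_inverse by blast
  then have "L ** matrix_inv L = mat 1"
    unfolding invertible_def matrix_inv_def by (rule someI_ex[where P="\<lambda>A'. L ** A' = mat 1 \<and> A' ** L = mat 1", THEN conjunct1])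
  then show ?thesis by (simp add: matrix_vector_mul_assoc)
qed

lemma dG:
  fixes c :: "real \<Rightarrow> real^'n" and v :: "real \<Rightarrow> real" and ce q :: "real^'n"
  assumes ck: "\<And>k. ((\<lambda>s. c s $ k) has_real_derivative c' $ k) (at t)"
    and vd: "(v has_real_derivative v') (at t)"
    and cpos: "\<And>k. c t $ k > 0" and vpos: "v t > 0" and ce_pos: "\<And>k. ce $ k > 0" and Apos: "A > 0"
  shows "((\<lambda>s. Gtilde ce A q (c s) (v s)) has_real_derivative
     v' * (\<Sum>k\<in>UNIV. c t $ k * (ln (c t $ k / ce $ k) - 1 + q $ k) + ce $ k)
     + v t * (\<Sum>k\<in>UNIV. (ln (c t $ k / ce $ k) + q $ k) * c' $ k) - A * v' / v t) (at t)"
proof -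
  have cen: "\<And>k. ce $ k \<noteq> 0" "\<And>k. c t $ k \<noteq> 0" using ce_pos cpos by (metis less_irrefl)+
  have vn: "v t \<noteq> 0" "0 < A / v t" using vpos Apos by auto
  have trm: "\<And>n. (1 / (c t $ n / ce $ n) * ((c' $ n * ce $ n - c t $ n * 0) / (ce $ n * ce $ n)) - 0 + 0) * c t $ n = c' $ n"
    using cen by (simp add: field_simps)
  have sc: "(\<Sum>n\<in>UNIV. c' $ n * (ln (c t $ n / ce $ n) - 1 + q $ n) + c' $ n) =
      (\<Sum>k\<in>UNIV. (ln (c t $ k / ce $ k) + q $ k) * c' $ k)"
    by (rule sum.cong) (auto simp: algebra_simps)
  have cq: "\<And>k. 0 < c t $ k / ce $ k" using ce_pos cpos by simp
  show ?thesis
  unfolding Gtilde_def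
  apply (rule derivative_eq_intros ck vd refl | simp add: cen cq vn sc mult.commute)+
  done
qed

theorem lemma3:
  fixes zv ce p :: "real^'n" and L :: "real^'n^'n"
    and A zA zeta :: real and T :: "real set"
    and c :: "real \<Rightarrow> real^'n" and v phi :: "real \<Rightarrow> real"
  assumes N2: "CARD('n) \<ge> 2"
    and zv_nz: "zv \<noteq> 0"
    and ce_pos: "\<forall>k. ce $ k > 0"
    and ce_neutral: "zv \<bullet> ce = 0"
    and A_pos: "A > 0"
    and L_sym: "transpose L = L"
    and L_pd: "\<forall>x. x \<noteq> 0 \<longrightarrow> x \<bullet> (L *v x) > 0"
    and zeta_pos: "zeta > 0"
    and T_int: "is_interval T" and T_open: "open T"
    and c_pos: "\<forall>t\<in>T. \<forall>k. c t $ k > 0"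
    and v_pos: "\<forall>t\<in>T. v t > 0"
    and c_C1: "c C1_differentiable_on T"
    and v_C1: "v C1_differentiable_on T"
    and phi_cont: "continuous_on T phi"
    and eq_c: "\<forall>t\<in>T. ((\<lambda>s. v s *\<^sub>R c s) has_vector_derivative
                   (- (L *v chempot ce zv (c t) (phi t)) - p)) (at t)"
    and eq_en: "\<forall>t\<in>T. zv \<bullet> c t + zA * A / v t = 0"
    and eq_v: "\<forall>t\<in>T. (v has_real_derivative (- zeta * piw ce A (c t) (v t))) (at t)"
  shows "(\<forall>t\<in>T.
            let q = matrix_inv L *v p;
                mu = chempot ce zv (c t) (phi t);
                g = gam ce (c t);
                pw = piw ce A (c t) (v t);
                J = (mu + q) \<bullet> (L *v (mu + q)) + zeta * pw\<^sup>2
            in ((\<lambda>s. Gtilde ce A q (c s) (v s)) has_real_derivative (- J)) (at t)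
               \<and> J = (g + q) \<bullet> (Lhat L zv *v (g + q)) + zeta * pw\<^sup>2)
         \<and> (\<forall>s\<in>T. \<forall>t\<in>T. s \<le> t \<longrightarrow>
               Gtilde ce A (matrix_inv L *v p) (c t) (v t)
                 \<le> Gtilde ce A (matrix_inv L *v p) (c s) (v s))"
proof -
  define q where "q = matrix_inv L *v p"
  have Lq: "L *v q = p" unfolding q_def using Linv L_pd by blast
  have Lnn: "\<And>x. x \<bullet> (L *v x) \<ge> 0"
    using L_pd by (metis inner_zero_left order_le_less)
  have dpos: "zv \<bullet> (L *v zv) > 0" using L_pd zv_nz by blast
  define mu where "mu t = chempot ce zv (c t) (phi t)" for t
  define g where "g t = gam ce (c t)" for t
  define pw where "pw t = piw ce A (c t) (v t)" for t
  define J where "J t = (mu t + q) \<bullet> (L *v (mu t + q)) + zeta * (pw t)\<^sup>2" for t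
  have main: "((\<lambda>s. Gtilde ce A q (c s) (v s)) has_real_derivative (- J t)) (at t)
      \<and> J t = (g t + q) \<bullet> (Lhat L zv *v (g t + q)) + zeta * (pw t)\<^sup>2" if tT: "t \<in> T" for t
  proof -
    define m where "m = mu t + q"
    define n' where "n' = - (L *v mu t) - p"
    define v' where "v' = - zeta * pw t"
    have n'm: "n' = - (L *v m)"
      unfolding n'_def m_def by (simp add: matrix_vector_right_distrib Lq)
    have vt: "v t > 0" using v_pos tT by blast
    have ct: "\<And>k. c t $ k > 0" using c_pos tT by blast
    have cep: "\<And>k. ce $ k > 0" using ce_pos by blast
    have vd: "(v has_real_derivative v') (at t)" unfolding v'_def pw_def using eq_v tT by blast
    have ecv: "((\<lambda>s. v s *\<^sub>R c s) has_vector_derivative n') (at t)"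
      unfolding n'_def mu_def using eq_c tT by blast
    have nk: "((\<lambda>s. v s * c s $ k) has_real_derivative n' $ k) (at t)" for k
      using bounded_linear.has_vector_derivative[OF bounded_linear_vec_nth ecv, of k]
      by (simp add: has_real_derivative_iff_has_vector_derivative)
    define c' where "c' = (\<chi> k. (n' $ k - c t $ k * v') / v t)"
    have ck: "((\<lambda>s. c s $ k) has_real_derivative c' $ k) (at t)" for k
    proof -
      have "((\<lambda>s. (v s * c s $ k) / v s) has_real_derivative
          (n' $ k * v t - (v t * c t $ k) * v') / (v t * v t)) (at t)"
        using DERIV_divide[OF nk vd] vt by simp
      moreover have "(n' $ k * v t - (v t * c t $ k) * v') / (v t * v t) = c' $ k"
        unfolding c'_def using vt by (simp add: field_simps)
      ultimately have "((\<lambda>s. (v s * c s $ k) / v s) has_real_derivative c' $ k) (at t)" by simp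
      then show ?thesis
        by (rule has_field_derivative_transform_within_open[OF _ T_open tT])
           (use v_pos in force)
    qed
    have zn: "zv \<bullet> n' = 0"
    proof -
      have h: "((\<lambda>s. zv \<bullet> (v s *\<^sub>R c s)) has_vector_derivative zv \<bullet> n') (at t)"
        using bounded_linear.has_vector_derivative[OF bounded_linear_inner_right ecv] .
      have "((\<lambda>s. - zA * A) has_real_derivative zv \<bullet> n') (at t)"
        unfolding has_real_derivative_iff_has_vector_derivative
      proof (rule has_vector_derivative_transform_within_open[OF h T_open tT])
        fix s assume "s \<in> T"
        then have "zv \<bullet> c s + zA * A / v s = 0" "v s > 0" using eq_en v_pos by auto
        then show "zv \<bullet> (v s *\<^sub>R c s) = - zA * A" by (simp add: field_simps)
      qed
      then show ?thesis using DERIV_const DERIV_unique by blast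
    qed
    have zLm: "zv \<bullet> (L *v m) = 0" using zn n'm by simp
    have dG': "((\<lambda>s. Gtilde ce A q (c s) (v s)) has_real_derivative
     v' * (\<Sum>k\<in>UNIV. c t $ k * (ln (c t $ k / ce $ k) - 1 + q $ k) + ce $ k)
     + v t * (\<Sum>k\<in>UNIV. (ln (c t $ k / ce $ k) + q $ k) * c' $ k) - A * v' / v t) (at t)"
      by (rule dG[OF ck vd ct vt cep A_pos])
    have s1: "v t * (\<Sum>k\<in>UNIV. (ln (c t $ k / ce $ k) + q $ k) * c' $ k)
        = (\<Sum>k\<in>UNIV. (ln (c t $ k / ce $ k) + q $ k) * n' $ k)
          - v' * (\<Sum>k\<in>UNIV. (ln (c t $ k / ce $ k) + q $ k) * c t $ k)"
      unfolding sum_distrib_left sum_subtractf[symmetric] c'_def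
      by (rule sum.cong) (use vt in \<open>auto simp: field_simps\<close>)
    have s2: "(\<Sum>k\<in>UNIV. c t $ k * (ln (c t $ k / ce $ k) - 1 + q $ k) + ce $ k)
        = (\<Sum>k\<in>UNIV. (ln (c t $ k / ce $ k) + q $ k) * c t $ k) - (\<Sum>k\<in>UNIV. c t $ k) + (\<Sum>k\<in>UNIV. ce $ k)"
      unfolding sum_subtractf[symmetric] sum.distrib[symmetric]
      by (rule sum.cong) (auto simp: algebra_simps)
    have s3: "(g t + q) \<bullet> n' = (\<Sum>k\<in>UNIV. (ln (c t $ k / ce $ k) + q $ k) * n' $ k)"
      unfolding g_def gam_def inner_vec_def by simp
    have pwe: "pw t = (\<Sum>k\<in>UNIV. ce $ k) - ((\<Sum>k\<in>UNIV. c t $ k) + A / v t)"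
      unfolding pw_def piw_def ..
    have D: "v' * (\<Sum>k\<in>UNIV. c t $ k * (ln (c t $ k / ce $ k) - 1 + q $ k) + ce $ k)
     + v t * (\<Sum>k\<in>UNIV. (ln (c t $ k / ce $ k) + q $ k) * c' $ k) - A * v' / v t
       = v' * pw t + (g t + q) \<bullet> n'"
      unfolding s1 s2 s3 pwe by (simp add: algebra_simps)
    have gq: "g t + q = m - phi t *\<^sub>R zv"
      unfolding m_def mu_def g_def chempot_def by simp
    have mLz: "m \<bullet> (L *v zv) = 0" using zLm sym_dot[OF L_sym] by metis
    have gn: "(g t + q) \<bullet> n' = - (m \<bullet> (L *v m))"
      unfolding gq n'm using zLm by (simp add: inner_diff_left)
    have J1: "J t = m \<bullet> (L *v m) + zeta * (pw t)\<^sup>2" unfolding J_def m_def ..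
    have deriv: "((\<lambda>s. Gtilde ce A q (c s) (v s)) has_real_derivative (- J t)) (at t)"
    proof -
      have eqJ: "v' * (\<Sum>k\<in>UNIV. c t $ k * (ln (c t $ k / ce $ k) - 1 + q $ k) + ce $ k)
       + v t * (\<Sum>k\<in>UNIV. (ln (c t $ k / ce $ k) + q $ k) * c' $ k) - A * v' / v t = - J t"
        unfolding D unfolding gn J1 v'_def by (simp add: power2_eq_square algebra_simps)
      show ?thesis using dG' unfolding eqJ .
    qed
    define x where "x = g t + q"
    define d where "d = zv \<bullet> (L *v zv)"
    have xa: "(L *v zv) \<bullet> x = - phi t * d"
    proof -
      have "(L *v zv) \<bullet> x = zv \<bullet> (L *v x)" using sym_dot[OF L_sym, of x zv] by (simp add: inner_commute)
      also have "\<dots> = - phi t * d" unfolding x_def gq d_def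
        using zLm by (simp add: matrix_vector_mult_diff_distrib inner_diff_right matrix_vector_mult_scaleR)
      finally show ?thesis .
    qed
    have xx: "x \<bullet> (L *v x) = m \<bullet> (L *v m) + (phi t)\<^sup>2 * d"
      unfolding x_def gq d_def
      using zLm mLz by (simp add: matrix_vector_mult_diff_distrib matrix_vector_mult_scaleR inner_diff_right inner_diff_left power2_eq_square)
    have "x \<bullet> (Lhat L zv *v x) = m \<bullet> (L *v m)"
      unfolding Lhat_quad xa xx using dpos unfolding d_def[symmetric]
      by (simp add: power2_eq_square field_simps)
    then have "J t = (g t + q) \<bullet> (Lhat L zv *v (g t + q)) + zeta * (pw t)\<^sup>2"
      unfolding J1 x_def by simp
    with deriv show ?thesis by blast
  qed
  have Jnn: "J t \<ge> 0" for t
    unfolding J_def using Lnn zeta_pos by (simp add: add_nonneg_nonneg)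
  have part1: "\<forall>t\<in>T.
            let q = matrix_inv L *v p;
                mu = chempot ce zv (c t) (phi t);
                g = gam ce (c t);
                pw = piw ce A (c t) (v t);
                J = (mu + q) \<bullet> (L *v (mu + q)) + zeta * pw\<^sup>2
            in ((\<lambda>s. Gtilde ce A q (c s) (v s)) has_real_derivative (- J)) (at t)
               \<and> J = (g + q) \<bullet> (Lhat L zv *v (g + q)) + zeta * pw\<^sup>2"
    using main unfolding Let_def q_def[symmetric] J_def mu_def g_def pw_def by blast
  have part2: "Gtilde ce A q (c t) (v t) \<le> Gtilde ce A q (c s) (v s)"
    if "s \<in> T" "t \<in> T" "s \<le> t" for s t
  proof (rule DERIV_nonpos_imp_nonincreasing[OF \<open>s \<le> t\<close>])
    fix x assume "s \<le> x" "x \<le> t"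
    then have "x \<in> T" using T_int that unfolding is_interval_1 by blast
    then show "\<exists>y. ((\<lambda>x. Gtilde ce A q (c x) (v x)) has_real_derivative y) (at x) \<and> y \<le> 0"
      using main Jnn by (metis neg_le_0_iff_le)
  qed
  show ?thesis using part1 part2 unfolding q_def by blast
qed

end
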